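(* Let $\Sigma$ be a Riemann surface and let $I_1,I_2$ be clean subsets of $\Sigma_{\mathbb{C}}$. Then $I_1\cup I_2$ is clean if and only if at least one of the following holds: (1) $I_1$ and $I_2$ are both conjugation invariant; (2) $I_i\cap\overline{I_j}=\emptyset$ for all $1\le i,j\le 2$; (3) $I_1=\overline{I_2}$; (4) $I_1\subset I_2$ or $I_2\subset I_1$.
   Context: For a Riemann surface $(\Sigma,j)$ write $\overline{\Sigma}=(\Sigma,-j)$. The complex double $\Sigma_{\mathbb{C}}=\Sigma\cup\overline{\Sigma}$ is obtained by gluing along the boundary by the identity, with complex structure restricting to $j$ on $\Sigma$ and $-j$ on $\overline\Sigma$; it carries an anti-holomorphic involution $z\mapsto\bar z$ exchanging the two copies, and for $S\subset\Sigma_{\mathbb{C}}$, $\overline S$ denotes its image. $S$ is conjugation invariant if $S=\overline S$, and clean if either $S=\overline{S}$ or $S\cap\overline{S}=\emptyset$. *)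

theory Defs
  imports Main
begin

(* Points of the complex double Sigma_C = Sigma \<union> conj Sigma, glued along the boundary Bd.
   A point is (x, b): x \<in> Sigma, b = True for the copy Sigma, b = False for the conjugate copy.
   Boundary points are identified, represented canonically by (x, True). *)
definition cdouble :: "'a set \<Rightarrow> 'a set \<Rightarrow> ('a \<times> bool) set" where
  "cdouble Sig Bd = {(x, b). x \<in> Sig \<and> (x \<in> Bd \<longrightarrow> b)}"

(* the anti-holomorphic involution z \<mapsto> conj z exchanging the two copies, fixing the boundary *)
definition conj_pt :: "'a set \<Rightarrow> 'a \<times> bool \<Rightarrow> 'a \<times> bool" where
  "conj_pt Bd p = (if fst p \<in> Bd then p else (fst p, \<not> snd p))"

definition conj_set :: "'a set \<Rightarrow> ('a \<times> bool) set \<Rightarrow> ('a \<times> bool) set" where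
  "conj_set Bd S = conj_pt Bd ` S"

definition conj_invariant :: "'a set \<Rightarrow> ('a \<times> bool) set \<Rightarrow> bool" where
  "conj_invariant Bd S \<longleftrightarrow> S = conj_set Bd S"

definition clean :: "'a set \<Rightarrow> ('a \<times> bool) set \<Rightarrow> bool" where
  "clean Bd S \<longleftrightarrow> S = conj_set Bd S \<or> S \<inter> conj_set Bd S = {}"

end

theory Submission
  imports Defs
begin

lemma conj_inv: "conj_pt Bd (conj_pt Bd p) = p"
  by (cases p) (auto simp: conj_pt_def)

lemma gen:
  assumes inv: "\<And>x. f (f x) = x"
    and c1: "A = f ` A \<or> A \<inter> f ` A = {}"
    and c2: "B = f ` B \<or> B \<inter> f ` B = {}"
  shows "(A \<union> B = f ` (A \<union> B) \<or> (A \<union> B) \<inter> f ` (A \<union> B) = {}) \<longleftrightarrow>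
          ((A = f ` A \<and> B = f ` B)
           \<or> (A \<inter> f ` A = {} \<and> A \<inter> f ` B = {} \<and> B \<inter> f ` A = {} \<and> B \<inter> f ` B = {})
           \<or> A = f ` B \<or> A \<subseteq> B \<or> B \<subseteq> A)"
proof -
  have mem: "\<And>x S. x \<in> f ` S \<longleftrightarrow> f x \<in> S"
    proof
    fix x S assume "x \<in> f ` S" then obtain y where "y \<in> S" "x = f y" by blast
    then show "f x \<in> S" using inv by simp
  next
    fix x S assume "f x \<in> S" then have "f (f x) \<in> f ` S" by (rule imageI)
    then show "x \<in> f ` S" using inv by simp
  qed
  show ?thesis
  proof
    assume "A \<union> B = f ` (A \<union> B) \<or> (A \<union> B) \<inter> f ` (A \<union> B) = {}"
    then show "(A = f ` A \<and> B = f ` B)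
           \<or> (A \<inter> f ` A = {} \<and> A \<inter> f ` B = {} \<and> B \<inter> f ` A = {} \<and> B \<inter> f ` B = {})
           \<or> A = f ` B \<or> A \<subseteq> B \<or> B \<subseteq> A"
    proof
      assume U: "A \<union> B = f ` (A \<union> B)"
      have U': "\<And>x. x \<in> A \<or> x \<in> B \<longleftrightarrow> f x \<in> A \<or> f x \<in> B"
        using U mem by (metis Un_iff)
      from c1 c2 show ?thesis
      proof (elim disjE)
        assume "A = f ` A" "B = f ` B" then show ?thesis by blast
      next
        assume a: "A = f ` A" and b: "B \<inter> f ` B = {}"
        have "B \<subseteq> A"
        proof
          fix x assume x: "x \<in> B"
          have "f x \<notin> B" using b x mem by blast
          moreover have "f x \<in> A \<or> f x \<in> B" using U'[of x] x by blast
          ultimately have "f x \<in> A" by blast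
          then show "x \<in> A" using a mem by blast
        qed
        then show ?thesis by blast
      next
        assume a: "A \<inter> f ` A = {}" and b: "B = f ` B"
        have "A \<subseteq> B"
        proof
          fix x assume x: "x \<in> A"
          have "f x \<notin> A" using a x mem by blast
          moreover have "f x \<in> A \<or> f x \<in> B" using U'[of x] x by blast
          ultimately have "f x \<in> B" by blast
          then show "x \<in> B" using b mem by blast
        qed
        then show ?thesis by blast
      next
        assume a: "A \<inter> f ` A = {}" and b: "B \<inter> f ` B = {}"
        have "A = f ` B"
        proof (rule set_eqI)
          fix x
          show "x \<in> A \<longleftrightarrow> x \<in> f ` B"
          proof
            assume x: "x \<in> A"
            have "f x \<notin> A" using a x mem by blast
            moreover have "f x \<in> A \<or> f x \<in> B" using U'[of x] x by blast
            ultimately show "x \<in> f ` B" using mem by blast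
          next
            assume "x \<in> f ` B" then have x: "f x \<in> B" using mem by blast
            have "f (f x) \<notin> B" using b x mem by blast
            then have "x \<notin> B" using inv by simp
            moreover have "x \<in> A \<or> x \<in> B" using U'[of x] x by blast
            ultimately show "x \<in> A" by blast
          qed
        qed
        then show ?thesis by blast
      qed
    next
      assume "(A \<union> B) \<inter> f ` (A \<union> B) = {}"
      then show ?thesis unfolding image_Un by blast
    qed
  next
    assume "(A = f ` A \<and> B = f ` B)
           \<or> (A \<inter> f ` A = {} \<and> A \<inter> f ` B = {} \<and> B \<inter> f ` A = {} \<and> B \<inter> f ` B = {})
           \<or> A = f ` B \<or> A \<subseteq> B \<or> B \<subseteq> A"
    then show "A \<union> B = f ` (A \<union> B) \<or> (A \<union> B) \<inter> f ` (A \<union> B) = {}"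
    proof (elim disjE)
      assume "A = f ` A \<and> B = f ` B" then show ?thesis by (metis image_Un)
    next
      assume "A \<inter> f ` A = {} \<and> A \<inter> f ` B = {} \<and> B \<inter> f ` A = {} \<and> B \<inter> f ` B = {}"
      then show ?thesis unfolding image_Un by blast
    next
      assume a: "A = f ` B"
      have "f ` A = B" using a inv by (simp add: image_image)
      then show ?thesis using a by (auto simp: image_Un)
    next
      assume "A \<subseteq> B" then show ?thesis using c2 by (simp add: sup.absorb2)
    next
      assume "B \<subseteq> A" then show ?thesis using c1 by (simp add: sup.absorb1)
    qed
  qed
qed

theorem lemma2p7:
  fixes Sig Bd :: "'a set" and I1 I2 :: "('a \<times> bool) set"
  assumes "Bd \<subseteq> Sig"
    and "I1 \<subseteq> cdouble Sig Bd" and "I2 \<subseteq> cdouble Sig Bd"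
    and "clean Bd I1" and "clean Bd I2"
  shows "clean Bd (I1 \<union> I2) \<longleftrightarrow>
          ((conj_invariant Bd I1 \<and> conj_invariant Bd I2)
           \<or> (I1 \<inter> conj_set Bd I1 = {} \<and> I1 \<inter> conj_set Bd I2 = {}
              \<and> I2 \<inter> conj_set Bd I1 = {} \<and> I2 \<inter> conj_set Bd I2 = {})
           \<or> I1 = conj_set Bd I2
           \<or> I1 \<subseteq> I2 \<or> I2 \<subseteq> I1)"
  using assms(4,5) unfolding clean_def conj_invariant_def conj_set_def
  by (rule gen[OF conj_inv])

end
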